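(* For all integers $n,\ell\geq 3$ the shift hypergraph $\mathrm{Sh}^{(3)}(n,\ell)$ is $K_4^{(3)-}$-free, i.e. no four of its vertices span three or more edges.
   Context: For integers $n,\ell\geq k\geq 2$ the $k$-uniform shift hypergraph $\mathrm{Sh}^{(k)}(n,\ell)$ has as vertex set the family of all $\ell$-element subsets of $[n]=\{1,\dots,n\}$, and for every increasing sequence $a_1<\dots<a_{k+\ell-1}$ of integers from $[n]$ it has the edge $\{x_1,\dots,x_k\}$ where $x_i=\{a_i,a_{i+1},\dots,a_{i+\ell-1}\}$ for $i\in[k]$; these are all its edges. $K_4^{(3)-}$ denotes the $3$-uniform hypergraph with four vertices and three edges. *)

theory Defs
  imports Main
begin

definition shift_vertices :: "nat \<Rightarrow> nat \<Rightarrow> nat set set" where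
  "shift_vertices n l = {x. x \<subseteq> {1..n} \<and> card x = l}"

definition shift_edges :: "nat \<Rightarrow> nat \<Rightarrow> nat \<Rightarrow> nat set set set" where
  "shift_edges k n l =
     {e. \<exists>a :: nat \<Rightarrow> nat.
           strict_mono_on {1..k+l-1} a \<and> a ` {1..k+l-1} \<subseteq> {1..n} \<and>
           e = (\<lambda>i. a ` {i..i+l-1}) ` {1..k}}"

definition K4minus_free :: "'a set \<Rightarrow> 'a set set \<Rightarrow> bool" where
  "K4minus_free V E \<longleftrightarrow>
     (\<forall>S. S \<subseteq> V \<and> card S = 4 \<longrightarrow> card {e \<in> E. e \<subseteq> S} < 3)"

end

theory Submission
  imports Defs
begin

definition good3 :: "('a \<Rightarrow> nat) \<Rightarrow> ('a \<Rightarrow> 'a \<Rightarrow> nat) \<Rightarrow> nat \<Rightarrow> nat \<Rightarrow> 'a \<Rightarrow> 'a \<Rightarrow> 'a \<Rightarrow> bool" where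
 "good3 f C A B x y z \<longleftrightarrow> f x < f y \<and> f y < f z \<and> C x y = A \<and> C y z = A \<and> C x z = B"

definition bet :: "nat \<Rightarrow> nat \<Rightarrow> nat \<Rightarrow> bool" where
  "bet w u v \<longleftrightarrow> (u < w \<and> w < v) \<or> (v < w \<and> w < u)"

lemma ord4s:
  fixes a b c d :: nat
  assumes "a < b" "b < c" "a \<noteq> d" "b \<noteq> d" "c \<noteq> d"
  and "bet b c d = bet a c d" "bet c b d = bet a b d" "bet c a d = bet b a d"
  shows False
proof -
  have "d < a \<or> (a < d \<and> d < b) \<or> (b < d \<and> d < c) \<or> c < d" using assms(1-5) by linarith
  then show False using assms unfolding bet_def by (elim disjE; simp)
qed

lemma ord4:
  fixes a b c d :: nat
  assumes "a \<noteq> b" "a \<noteq> c" "a \<noteq> d" "b \<noteq> c" "b \<noteq> d" "c \<noteq> d"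
  and "bet b c d = bet a c d" "bet c b d = bet a b d" "bet c a d = bet b a d"
  shows False
proof -
  have "(a<b\<and>b<c) \<or> (a<c\<and>c<b) \<or> (b<a\<and>a<c) \<or> (b<c\<and>c<a) \<or> (c<a\<and>a<b) \<or> (c<b\<and>b<a)"
    using assms(1,2,4) by linarith
  then show False
  proof (elim disjE conjE)
    assume "a<b" "b<c" then show False using ord4s[of a b c d] assms by metis
  next
    assume "a<c" "c<b" then show False using ord4s[of a c b d] assms by metis
  next
    assume "b<a" "a<c" then show False using ord4s[of b a c d] assms by metis
  next
    assume "b<c" "c<a" then show False using ord4s[of b c a d] assms by metis
  next
    assume "c<a" "a<b" then show False using ord4s[of c a b d] assms by metis
  next
    assume "c<b" "b<a" then show False using ord4s[of c b a d] assms by metis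
  qed
qed
lemma perm3:
  assumes "{x,y,z} = {p,q,r::'a}" "x \<noteq> y" "y \<noteq> z" "x \<noteq> z"
  shows "(x=p\<and>y=q\<and>z=r) \<or> (x=p\<and>y=r\<and>z=q) \<or> (x=q\<and>y=p\<and>z=r) \<or> (x=q\<and>y=r\<and>z=p) \<or> (x=r\<and>y=p\<and>z=q) \<or> (x=r\<and>y=q\<and>z=p)"
proof -
  have "x \<in> {p,q,r}" "y \<in> {p,q,r}" "z \<in> {p,q,r}" "p \<in> {x,y,z}" "q \<in> {x,y,z}" "r \<in> {x,y,z}" using assms(1) by blast+
  then show ?thesis using assms(2-4) by auto
qed

lemma good_pair:
  assumes sym: "\<And>u v. C u v = C v u"
  and g: "good3 f C A B x y z" and T: "{x,y,z} = {u,v,w}"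
  shows "C u v = (if bet (f w) (f u) (f v) then B else A)
     \<and> f u \<noteq> f v \<and> f v \<noteq> f w \<and> f u \<noteq> f w"
proof -
  have d: "x \<noteq> y" "y \<noteq> z" "x \<noteq> z" using g unfolding good3_def by auto
  show ?thesis using perm3[OF T d] g sym[of x y] sym[of y z] sym[of x z] unfolding good3_def bet_def
    by (elim disjE conjE) auto
qed

lemma if_eq_iff: "(if P then B else A) = (if Q then B else (A::nat)) \<Longrightarrow> A \<noteq> B \<Longrightarrow> P = Q"
  by (cases P; cases Q) auto

lemma core:
  assumes sym: "\<And>u v. C u v = C v u" and AB: "A \<noteq> B"
  and e1: "good3 f C A B x1 y1 z1" "{x1,y1,z1} = {b,c,d}"
  and e2: "good3 f C A B x2 y2 z2" "{x2,y2,z2} = {a,c,d}"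
  and e3: "good3 f C A B x3 y3 z3" "{x3,y3,z3} = {a,b,d}"
  shows False
proof -
  have q: "{x1,y1,z1} = {c,d,b}" "{x2,y2,z2} = {c,d,a}" "{x1,y1,z1} = {b,d,c}"
     "{x3,y3,z3} = {b,d,a}" "{x2,y2,z2} = {a,d,c}" "{x3,y3,z3} = {a,d,b}"
    using e1(2) e2(2) e3(2) by auto
  note p1 = good_pair[OF sym e1(1) q(1)]
  note p2 = good_pair[OF sym e2(1) q(2)]
  note p3 = good_pair[OF sym e1(1) q(3)]
  note p4 = good_pair[OF sym e3(1) q(4)]
  note p5 = good_pair[OF sym e2(1) q(5)]
  note p6 = good_pair[OF sym e3(1) q(6)]
  have "bet (f b) (f c) (f d) = bet (f a) (f c) (f d)"
    using if_eq_iff[OF trans[OF HOL.sym[OF conjunct1[OF p1]] conjunct1[OF p2]] AB] .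
  moreover have "bet (f c) (f b) (f d) = bet (f a) (f b) (f d)"
    using if_eq_iff[OF trans[OF HOL.sym[OF conjunct1[OF p3]] conjunct1[OF p4]] AB] .
  moreover have "bet (f c) (f a) (f d) = bet (f b) (f a) (f d)"
    using if_eq_iff[OF trans[OF HOL.sym[OF conjunct1[OF p5]] conjunct1[OF p6]] AB] .
  moreover have "f a \<noteq> f b" "f a \<noteq> f c" "f a \<noteq> f d" "f b \<noteq> f c" "f b \<noteq> f d" "f c \<noteq> f d"
    using conjunct2[OF p1] conjunct2[OF p2] conjunct2[OF p3] conjunct2[OF p4] conjunct2[OF p5] conjunct2[OF p6] by auto
  ultimately show False using ord4 by blast
qed

lemma min_seg:
  fixes a :: "nat \<Rightarrow> nat"
  assumes sm: "strict_mono_on D a" and sub: "{i..j} \<subseteq> D" and ij: "i \<le> j"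
  shows "Min (a ` {i..j}) = (a i :: nat)"
proof (rule Min_eqI)
  show "finite (a ` {i..j})" by simp
  show "a i \<in> a ` {i..j}" using ij by auto
  fix y assume "y \<in> a ` {i..j}"
  then obtain k where k: "k \<in> {i..j}" "y = a k" by auto
  show "a i \<le> y"
  proof (cases "k = i")
    case False
    then have "i < k" using k by auto
    moreover have "i \<in> D" "k \<in> D" using sub k ij by auto
    ultimately show ?thesis using strict_mono_onD[OF sm, of i k] k by simp
  qed (use k in simp)
qed

lemma card_seg_int:
  fixes a :: "nat \<Rightarrow> nat"
  assumes inj: "inj_on a D" and s1: "{i..j} \<subseteq> D" and s2: "{p..q} \<subseteq> D"
  shows "card (a ` {i..j} \<inter> a ` {p..q}) = card ({i..j} \<inter> {p..q::nat})"
proof -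
  have "a ` {i..j} \<inter> a ` {p..q} = a ` ({i..j} \<inter> {p..q})"
    using inj_on_image_Int[OF inj s1 s2] by simp
  moreover have "inj_on a ({i..j} \<inter> {p..q})" using inj s1 by (meson inf.coboundedI1 inj_on_subset)
  ultimately show ?thesis by (simp add: card_image)
qed

lemma edge_good:
  assumes e: "e \<in> shift_edges 3 n l" and l: "l \<ge> 3"
  shows "\<exists>x y z. e = {x,y,z} \<and> good3 Min (\<lambda>u v. card (u \<inter> v)) (l-1) (l-2) x y z"
proof -
  obtain a :: "nat \<Rightarrow> nat" where sm: "strict_mono_on {1..3+l-1} a"
    and ed: "e = (\<lambda>i. a ` {i..i+l-1}) ` {1..3}"
    using e unfolding shift_edges_def by blast
  define D where "D = {1..3+l-1}"
  have smD: "strict_mono_on D a" using sm D_def by simp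
  have inj: "inj_on a D" using strict_mono_on_imp_inj_on[OF smD] .
  have 3: "{1..3::nat} = {1,2,3}" by auto
  have eq: "e = {a ` {1..l}, a ` {2..l+1}, a ` {3..l+2}}"
    unfolding ed 3 by (simp add: eval_nat_numeral)
  have s1: "{1..l} \<subseteq> D" and s2: "{2..l+1} \<subseteq> D" and s3: "{3..l+2} \<subseteq> D"
    unfolding D_def using l by auto
  have m1: "Min (a ` {1..l}) = a 1" using min_seg[OF smD s1] l by simp
  have m2: "Min (a ` {2..l+1}) = a 2" using min_seg[OF smD s2] l by simp
  have m3: "Min (a ` {3..l+2}) = a 3" using min_seg[OF smD s3] l by simp
  have a12: "a 1 < a 2" "a 2 < a 3" using strict_mono_onD[OF smD] l unfolding D_def by auto
  have i12: "{1..l} \<inter> {2..l+1} = {2..l}" and i23: "{2..l+1} \<inter> {3..l+2} = {3..l+1}"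
    and i13: "{1..l} \<inter> {3..l+2} = {3..l}" by auto
  have c12: "card (a ` {1..l} \<inter> a ` {2..l+1}) = l - 1"
    using card_seg_int[OF inj s1 s2] i12 by simp
  have c23: "card (a ` {2..l+1} \<inter> a ` {3..l+2}) = l - 1"
    using card_seg_int[OF inj s2 s3] i23 by simp
  have c13: "card (a ` {1..l} \<inter> a ` {3..l+2}) = l - 2"
    using card_seg_int[OF inj s1 s3] i13 by simp
  show ?thesis
    apply (rule exI[of _ "a ` {1..l}"], rule exI[of _ "a ` {2..l+1}"], rule exI[of _ "a ` {3..l+2}"])
    using eq m1 m2 m3 a12 c12 c23 c13 unfolding good3_def by simp
qed
theorem lemma3p4:
  fixes n l :: nat
  assumes "n \<ge> 3" and "l \<ge> 3"
  shows "K4minus_free (shift_vertices n l) (shift_edges 3 n l)"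
  unfolding K4minus_free_def
proof (intro allI impI)
  fix S :: "nat set set"
  assume S: "S \<subseteq> shift_vertices n l \<and> card S = 4"
  define E' where "E' = {e \<in> shift_edges 3 n l. e \<subseteq> S}"
  have finS: "finite S" using S by (intro card_ge_0_finite) auto
  show "card {e \<in> shift_edges 3 n l. e \<subseteq> S} < 3"
  proof (rule ccontr)
    assume "\<not> ?thesis"
    then have "3 \<le> card E'" unfolding E'_def by simp
    then obtain T where T: "T \<subseteq> E'" "card T = 3" by (meson obtain_subset_with_card_n)
    then obtain e1 e2 e3 where T3: "T = {e1,e2,e3}" "e1 \<noteq> e2" "e2 \<noteq> e3" "e1 \<noteq> e3"
      by (auto simp: card_3_iff)
    define C where "C = (\<lambda>u v :: nat set. card (u \<inter> v))"
    have symC: "\<And>u v. C u v = C v u" unfolding C_def by (simp add: Int_commute)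
    have AB: "l - 1 \<noteq> l - 2" using assms(2) by simp
    have gd: "\<exists>x y z. e = {x,y,z} \<and> good3 Min C (l-1) (l-2) x y z" if "e \<in> T" for e
      using edge_good[of e n l] that T(1) assms(2) unfolding E'_def C_def by auto
    have sing: "\<exists>v. S - e = {v}" if eT: "e \<in> T" for e
    proof -
      obtain x y z where "e = {x,y,z}" "good3 Min C (l-1) (l-2) x y z" using gd[OF eT] by blast
      then have "x \<noteq> y" "y \<noteq> z" "x \<noteq> z" "e = {x,y,z}" unfolding good3_def by auto
      then have "card e = 3" by simp
      moreover have "e \<subseteq> S" using eT T(1) unfolding E'_def by auto
      ultimately have "card (S - e) = 1" using S finS by (simp add: card_Diff_subset finite_subset)
      then show ?thesis using card_1_singleton_iff by auto
    qed
    have sub: "e \<subseteq> S" if "e \<in> T" for e using that T(1) unfolding E'_def by blast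
    have h1: "e1 \<in> T" and h2: "e2 \<in> T" and h3: "e3 \<in> T" using T3(1) by simp_all
    from sing[OF h1] obtain a where a: "S - e1 = {a}" ..
    from sing[OF h2] obtain b where b: "S - e2 = {b}" ..
    from sing[OF h3] obtain c where c: "S - e3 = {c}" ..
    have e1: "e1 = S - {a}" using a sub[OF h1] by blast
    have e2: "e2 = S - {b}" using b sub[OF h2] by blast
    have e3: "e3 = S - {c}" using c sub[OF h3] by blast
    have abc: "a \<in> S" "b \<in> S" "c \<in> S" using a b c by auto
    have dab: "a \<noteq> b" "b \<noteq> c" "a \<noteq> c"
      using e1 e2 e3 T3(2,3,4) by metis+
    have c3: "card {a,b,c} = 3" using dab by simp
    have sabc: "{a,b,c} \<subseteq> S" using abc by simp
    have cS: "card S = 4" using S by simp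
    have "card (S - {a,b,c}) = card S - card {a,b,c}"
      using card_Diff_subset[of "{a,b,c}" S] sabc by simp
    then have "card (S - {a,b,c}) = Suc 0" using c3 cS by simp
    then obtain d where d: "S - {a,b,c} = {d}" by (auto simp only: card_1_singleton_iff)
    have Seq: "S = {a,b,c,d}"
    proof -
      have "S = (S - {a,b,c}) \<union> {a,b,c}" using sabc by blast
      also have "\<dots> = {a,b,c,d}" unfolding d by auto
      finally show ?thesis .
    qed
    have "d \<in> S - {a,b,c}" using d by simp
    then have dd: "d \<noteq> a" "d \<noteq> b" "d \<noteq> c" by simp_all
    have E1: "e1 = {b,c,d}" using e1 Seq dab dd by auto
    have E2: "e2 = {a,c,d}" using e2 Seq dab dd by auto
    have E3: "e3 = {a,b,d}" using e3 Seq dab dd by auto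
    from gd[OF h1] obtain x1 y1 z1 where g1: "e1 = {x1,y1,z1}" "good3 Min C (l-1) (l-2) x1 y1 z1" by blast
    from gd[OF h2] obtain x2 y2 z2 where g2: "e2 = {x2,y2,z2}" "good3 Min C (l-1) (l-2) x2 y2 z2" by blast
    from gd[OF h3] obtain x3 y3 z3 where g3: "e3 = {x3,y3,z3}" "good3 Min C (l-1) (l-2) x3 y3 z3" by blast
    have q1: "{x1,y1,z1} = {b,c,d}" using g1(1) E1 by simp
    have q2: "{x2,y2,z2} = {a,c,d}" using g2(1) E2 by simp
    have q3: "{x3,y3,z3} = {a,b,d}" using g3(1) E3 by simp
    show False by (rule core[OF symC AB g1(2) q1 g2(2) q2 g3(2) q3])
  qed
qed

end
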